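(* For $\theta\in[0,\pi/2]$ let $a_1=\frac{1}{\sqrt3}\cos\theta$, $a_2=\frac{1}{\sqrt3}\sin\theta$, $a_3=\sqrt{2/3}$, and define the torus $y_\theta:[0,2\pi]^2\to S^5$, \[y_\theta(s,\hat s)=\big(a_1\cos(s+\hat s),a_1\sin(s+\hat s),a_2\cos(s-\hat s),a_2\sin(s-\hat s),a_3\cos\hat s,a_3\sin\hat s\big).\] Then, with $\rho=\sqrt{2+\sin^2 2\theta}\in[\sqrt2,\sqrt3]$, \[W(y_\theta)=6\pi^2\Big(\frac{2}{\rho}-\frac{3}{\rho^3}\Big),\] which is increasing in $\rho$ on $[\sqrt2,\sqrt3]$. The torus $y_{\pi/4}$ is (up to an isometry of $S^5$) the Ejiri torus, with $W(y_{\pi/4})=2\pi^2\sqrt3$, and it attains the maximum of $W$ in this family; consequently the Ejiri torus is unstable as a Willmore surface in $S^5$.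
   Context: For a closed immersed surface $x:M\to S^N$ with mean curvature vector $\vec H$ and Gauss curvature $K$, the Willmore functional is $W(x)=\int_M(|\vec H|^2-K+1)\,dM$. The Ejiri torus is $E:(s,\hat s)\mapsto\frac{1}{\sqrt3}\big(\cos\hat s\cos\sqrt3 s,\ \sin\hat s\cos\sqrt3 s,\ \cos\hat s\sin\sqrt3 s,\ \sin\hat s\sin\sqrt3 s,\ \sqrt2\cos\hat s,\ \sqrt2\sin\hat s\big)\in S^5$; it is a Willmore surface. *)

theory Defs
  imports "HOL-Analysis.Analysis"
begin

type_synonym surf6 = "real \<Rightarrow> real \<Rightarrow> real^6"

definition d1 :: "surf6 \<Rightarrow> surf6" where
  "d1 x = (\<lambda>s t. vector_derivative (\<lambda>u. x u t) (at s))"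

definition d2 :: "surf6 \<Rightarrow> surf6" where
  "d2 x = (\<lambda>s t. vector_derivative (\<lambda>u. x s u) (at t))"

definition p1 :: "(real \<Rightarrow> real \<Rightarrow> real) \<Rightarrow> real \<Rightarrow> real \<Rightarrow> real" where
  "p1 f = (\<lambda>s t. deriv (\<lambda>u. f u t) s)"

definition p2 :: "(real \<Rightarrow> real \<Rightarrow> real) \<Rightarrow> real \<Rightarrow> real \<Rightarrow> real" where
  "p2 f = (\<lambda>s t. deriv (\<lambda>u. f s u) t)"

definition fE :: "surf6 \<Rightarrow> real \<Rightarrow> real \<Rightarrow> real" where
  "fE x = (\<lambda>s t. d1 x s t \<bullet> d1 x s t)"
definition fF :: "surf6 \<Rightarrow> real \<Rightarrow> real \<Rightarrow> real" where
  "fF x = (\<lambda>s t. d1 x s t \<bullet> d2 x s t)"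
definition fG :: "surf6 \<Rightarrow> real \<Rightarrow> real \<Rightarrow> real" where
  "fG x = (\<lambda>s t. d2 x s t \<bullet> d2 x s t)"

text \<open>Component of v normal to the surface inside S^5 at the point x s t, i.e. orthogonal
  to the tangent vectors and to the position vector (the normal of S^5 in R^6).\<close>
definition nrm :: "surf6 \<Rightarrow> real \<Rightarrow> real \<Rightarrow> real^6 \<Rightarrow> real^6" where
  "nrm x s t v = v - closest_point (span {d1 x s t, d2 x s t, x s t}) v"

text \<open>Mean curvature vector in S^5: H = (1/2) g^{ij} B_ij, B_ij = (x_ij)^perp.\<close>
definition mean_curv :: "surf6 \<Rightarrow> real \<Rightarrow> real \<Rightarrow> real^6" where
  "mean_curv x s t =
    (let E = fE x s t; F = fF x s t; G = fG x s t;
         B11 = nrm x s t (d1 (d1 x) s t);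
         B12 = nrm x s t (d2 (d1 x) s t);
         B22 = nrm x s t (d2 (d2 x) s t)
     in (1 / (2 * (E * G - F\<^sup>2))) *\<^sub>R (G *\<^sub>R B11 - (2 * F) *\<^sub>R B12 + E *\<^sub>R B22))"

text \<open>Gauss curvature of the induced metric (intrinsic; Brioschi formula).\<close>
definition gauss_curv :: "surf6 \<Rightarrow> real \<Rightarrow> real \<Rightarrow> real" where
  "gauss_curv x s t =
    (let E = fE x s t; F = fF x s t; G = fG x s t;
         Es = p1 (fE x) s t; Et = p2 (fE x) s t;
         Fs = p1 (fF x) s t; Ft = p2 (fF x) s t;
         Gs = p1 (fG x) s t; Gt = p2 (fG x) s t;
         Ett = p2 (p2 (fE x)) s t; Fst = p2 (p1 (fF x)) s t; Gss = p1 (p1 (fG x)) s t;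
         det3 = (\<lambda>a b c d e f g h i. a*(e*i - f*h) - b*(d*i - f*g) + c*(d*h - e*g) :: real)
     in (det3 (-Ett/2 + Fst - Gss/2) (Es/2) (Fs - Et/2)
              (Ft - Gs/2) E F
              (Gt/2) F G
         - det3 0 (Et/2) (Gs/2)
              (Et/2) E F
              (Gs/2) F G) / (E * G - F\<^sup>2)\<^sup>2)"

definition willmore :: "surf6 \<Rightarrow> real \<Rightarrow> real \<Rightarrow> real" where
  "willmore x A B = integral (cbox (0, 0) (A, B))
     (\<lambda>p. ((norm (mean_curv x (fst p) (snd p)))\<^sup>2 - gauss_curv x (fst p) (snd p) + 1)
          * sqrt (fE x (fst p) (snd p) * fG x (fst p) (snd p) - (fF x (fst p) (snd p))\<^sup>2))"

definition dirder :: "'a::euclidean_space \<Rightarrow> ('a \<Rightarrow> 'b::real_normed_vector) \<Rightarrow> 'a \<Rightarrow> 'b" where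
  "dirder v f = (\<lambda>p. vector_derivative (\<lambda>h. f (p + h *\<^sub>R v)) (at 0))"

fun iter_dirder :: "'a::euclidean_space list \<Rightarrow> ('a \<Rightarrow> 'b::real_normed_vector) \<Rightarrow> 'a \<Rightarrow> 'b" where
  "iter_dirder [] f = f"
| "iter_dirder (v # vs) f = dirder v (iter_dirder vs f)"

definition smooth_map :: "('a::euclidean_space \<Rightarrow> 'b::real_normed_vector) \<Rightarrow> bool" where
  "smooth_map f \<longleftrightarrow>
     (\<forall>vs. set vs \<subseteq> Basis \<longrightarrow>
        continuous_on UNIV (iter_dirder vs f) \<and>
        (\<forall>v\<in>Basis. \<forall>p. ((\<lambda>h. iter_dirder vs f (p + h *\<^sub>R v))
                         has_vector_derivative dirder v (iter_dirder vs f) p) (at 0)))"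

definition torus_immersion_S5 :: "surf6 \<Rightarrow> real \<Rightarrow> real \<Rightarrow> bool" where
  "torus_immersion_S5 x A B \<longleftrightarrow> A > 0 \<and> B > 0 \<and>
     smooth_map (\<lambda>p::real\<times>real. x (fst p) (snd p)) \<and>
     (\<forall>s t. norm (x s t) = 1) \<and>
     (\<forall>s t. x (s + A) t = x s t \<and> x s (t + B) = x s t) \<and>
     (\<forall>s t. fE x s t * fG x s t - (fF x s t)\<^sup>2 > 0)"

definition willmore_unstable :: "surf6 \<Rightarrow> real \<Rightarrow> real \<Rightarrow> bool" where
  "willmore_unstable x A B \<longleftrightarrow>
     (\<exists>V :: real \<Rightarrow> surf6. \<exists>\<epsilon>>0. \<exists>D c.
        V 0 = x \<and>
        smooth_map (\<lambda>q::real\<times>real\<times>real. V (fst q) (fst (snd q)) (snd (snd q))) \<and>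
        (\<forall>\<tau>\<in>{-\<epsilon><..<\<epsilon>}. torus_immersion_S5 (V \<tau>) A B) \<and>
        (\<forall>\<tau>\<in>{-\<epsilon><..<\<epsilon>}. ((\<lambda>r. willmore (V r) A B) has_real_derivative D \<tau>) (at \<tau>)) \<and>
        (D has_real_derivative c) (at 0) \<and> c < 0)"

definition ytheta :: "real \<Rightarrow> surf6" where
  "ytheta \<theta> = (\<lambda>s t.
     (let a1 = cos \<theta> / sqrt 3; a2 = sin \<theta> / sqrt 3; a3 = sqrt (2/3)
      in vector [a1 * cos (s + t), a1 * sin (s + t), a2 * cos (s - t), a2 * sin (s - t),
                 a3 * cos t, a3 * sin t]))"

definition ejiri :: surf6 where
  "ejiri = (\<lambda>s t. (1 / sqrt 3) *\<^sub>R
     vector [cos t * cos (sqrt 3 * s), sin t * cos (sqrt 3 * s), cos t * sin (sqrt 3 * s),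
             sin t * sin (sqrt 3 * s), sqrt 2 * cos t, sqrt 2 * sin t])"

end

theory Submission
  imports Defs
begin


definition Cv :: "real^6 \<Rightarrow> real^6 \<Rightarrow> real \<Rightarrow> real^6" where
  "Cv u v \<phi> = cos \<phi> *\<^sub>R u + sin \<phi> *\<^sub>R v"

lemma Cv_deriv[derivative_intros]:
  assumes "(f has_real_derivative f') (at x)"
  shows "((\<lambda>x. Cv u v (f x)) has_vector_derivative (f' *\<^sub>R Cv v (-u) (f x))) (at x)"
  unfolding Cv_def
  by (auto intro!: derivative_eq_intros assms simp: algebra_simps)

lemma Cv_neg: "Cv (-u) (-v) p = - Cv u v p" by (simp add: Cv_def algebra_simps)

lemma closest_span:
  fixes a p :: "'a::euclidean_space"
  assumes p: "p \<in> span S" and o: "\<And>z. z \<in> S \<Longrightarrow> (a - p) \<bullet> z = 0"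
  shows "closest_point (span S) a = p"
proof -
  have oz: "(a - p) \<bullet> z = 0" if "z \<in> span S" for z
    using orthogonal_to_span[OF that, of "a - p"] o unfolding orthogonal_def by blast
  have "dist a p \<le> dist a z" if z: "z \<in> span S" for z
  proof -
    have "p - z \<in> span S" using p z by (simp add: span_diff)
    then have "(a - p) \<bullet> (p - z) = 0" by (rule oz)
    then have "(dist a z)^2 = (dist a p)^2 + (norm (p - z))^2"
      unfolding dist_norm power2_norm_eq_inner
      by (simp add: inner_diff_left inner_diff_right inner_commute algebra_simps)
    then show ?thesis
      by (smt (verit) zero_le_dist zero_le_power2 power2_le_imp_le)
  qed
  then show ?thesis
    by (intro closest_point_unique[symmetric] p) (auto simp: subspace_imp_convex closed_span)
qed

lemma proj3:
  fixes v b1 b2 x :: "'a::euclidean_space"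
  assumes "v\<bullet>b1 = 0" "v\<bullet>b2 = 0" "x\<bullet>b1 = 0" "x\<bullet>b2 = 0" "x\<bullet>x = 1"
  shows "closest_point (span {b1,b2,x}) v = (v\<bullet>x) *\<^sub>R x"
  using assms
  by (intro closest_span) (auto simp: span_base span_mul inner_diff_left)

locale ON6 =
  fixes u1 v1 u2 v2 u3 v3 :: "real^6"
  assumes n: "u1\<bullet>u1 = 1" "v1\<bullet>v1 = 1" "u2\<bullet>u2 = 1" "v2\<bullet>v2 = 1" "u3\<bullet>u3 = 1" "v3\<bullet>v3 = 1"
  and o: "u1\<bullet>v1 = 0" "u1\<bullet>u2 = 0" "u1\<bullet>v2 = 0" "u1\<bullet>u3 = 0" "u1\<bullet>v3 = 0"
         "v1\<bullet>u2 = 0" "v1\<bullet>v2 = 0" "v1\<bullet>u3 = 0" "v1\<bullet>v3 = 0"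
         "u2\<bullet>v2 = 0" "u2\<bullet>u3 = 0" "u2\<bullet>v3 = 0"
         "v2\<bullet>u3 = 0" "v2\<bullet>v3 = 0" "u3\<bullet>v3 = 0"
begin

lemmas o' = o[THEN inner_commute[THEN trans]]

definition C1 where "C1 = Cv u1 v1"
definition C2 where "C2 = Cv u2 v2"
definition C3 where "C3 = Cv u3 v3"
definition P1 where "P1 = Cv v1 (-u1)"
definition P2 where "P2 = Cv v2 (-u2)"
definition P3 where "P3 = Cv v3 (-u3)"

lemma inners:
  "C1 x \<bullet> C1 y = cos (x - y)" "C2 x \<bullet> C2 y = cos (x - y)" "C3 x \<bullet> C3 y = cos (x - y)"
  "P1 x \<bullet> P1 y = cos (x - y)" "P2 x \<bullet> P2 y = cos (x - y)" "P3 x \<bullet> P3 y = cos (x - y)"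
  "C1 x \<bullet> P1 y = sin (x - y)" "C2 x \<bullet> P2 y = sin (x - y)" "C3 x \<bullet> P3 y = sin (x - y)"
  "P1 x \<bullet> C1 y = - sin (x - y)" "P2 x \<bullet> C2 y = - sin (x - y)" "P3 x \<bullet> C3 y = - sin (x - y)"
  "C1 x \<bullet> C2 y = 0" "C1 x \<bullet> C3 y = 0" "C2 x \<bullet> C3 y = 0"
  "C2 x \<bullet> C1 y = 0" "C3 x \<bullet> C1 y = 0" "C3 x \<bullet> C2 y = 0"
  "C1 x \<bullet> P2 y = 0" "C1 x \<bullet> P3 y = 0" "C2 x \<bullet> P3 y = 0"
  "C2 x \<bullet> P1 y = 0" "C3 x \<bullet> P1 y = 0" "C3 x \<bullet> P2 y = 0"
  "P1 x \<bullet> C2 y = 0" "P1 x \<bullet> C3 y = 0" "P2 x \<bullet> C3 y = 0"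
  "P2 x \<bullet> C1 y = 0" "P3 x \<bullet> C1 y = 0" "P3 x \<bullet> C2 y = 0"
  "P1 x \<bullet> P2 y = 0" "P1 x \<bullet> P3 y = 0" "P2 x \<bullet> P3 y = 0"
  "P2 x \<bullet> P1 y = 0" "P3 x \<bullet> P1 y = 0" "P3 x \<bullet> P2 y = 0"
  by (simp_all add: C1_def C2_def C3_def P1_def P2_def P3_def Cv_def inner_add_left inner_add_right
      n o o' cos_diff sin_diff algebra_simps)

definition X where "X a1 a2 a3 k = (\<lambda>s t. a1 *\<^sub>R C1 (k * s + t) + a2 *\<^sub>R C2 (k * s - t) + a3 *\<^sub>R C3 t)"

lemma Pder:
  "P1 = Cv v1 (-u1)" "P2 = Cv v2 (-u2)" "P3 = Cv v3 (-u3)"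
  "Cv (-u1) (-v1) = (\<lambda>x. - C1 x)" "Cv (-u2) (-v2) = (\<lambda>x. - C2 x)" "Cv (-u3) (-v3) = (\<lambda>x. - C3 x)"
  by (auto simp: P1_def P2_def P3_def C1_def C2_def C3_def Cv_neg)

lemma d1X: "d1 (X a1 a2 a3 k) = (\<lambda>s t. (k*a1) *\<^sub>R P1 (k * s + t) + (k*a2) *\<^sub>R P2 (k * s - t))"
proof (intro ext)
  fix s t
  have "((\<lambda>s. X a1 a2 a3 k s t) has_vector_derivative (k*a1) *\<^sub>R P1 (k * s + t) + (k*a2) *\<^sub>R P2 (k * s - t)) (at s)"
    unfolding X_def C1_def C2_def C3_def P1_def P2_def
    by (auto intro!: derivative_eq_intros simp: mult.commute)
  then show "d1 (X a1 a2 a3 k) s t = (k*a1) *\<^sub>R P1 (k * s + t) + (k*a2) *\<^sub>R P2 (k * s - t)"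
    unfolding d1_def by (rule vector_derivative_at)
qed

lemma d2X: "d2 (X a1 a2 a3 k) = (\<lambda>s t. a1 *\<^sub>R P1 (k * s + t) - a2 *\<^sub>R P2 (k * s - t) + a3 *\<^sub>R P3 t)"
proof (intro ext)
  fix s t
  have "((\<lambda>t. X a1 a2 a3 k s t) has_vector_derivative a1 *\<^sub>R P1 (k * s + t) - a2 *\<^sub>R P2 (k * s - t) + a3 *\<^sub>R P3 t) (at t)"
    unfolding X_def C1_def C2_def C3_def P1_def P2_def P3_def
    by (auto intro!: derivative_eq_intros simp: mult.commute)
  then show "d2 (X a1 a2 a3 k) s t = a1 *\<^sub>R P1 (k * s + t) - a2 *\<^sub>R P2 (k * s - t) + a3 *\<^sub>R P3 t"
    unfolding d2_def by (rule vector_derivative_at)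
qed

lemma d11X: "d1 (d1 (X a1 a2 a3 k)) = (\<lambda>s t. - (k*k*a1) *\<^sub>R C1 (k * s + t) - (k*k*a2) *\<^sub>R C2 (k * s - t))"
proof (intro ext)
  fix s t
  have "((\<lambda>s. d1 (X a1 a2 a3 k) s t) has_vector_derivative - (k*k*a1) *\<^sub>R C1 (k * s + t) - (k*k*a2) *\<^sub>R C2 (k * s - t)) (at s)"
    unfolding d1X Pder(1-3)
    by (auto intro!: derivative_eq_intros simp: mult.commute Pder(4-6) algebra_simps)
  then show "d1 (d1 (X a1 a2 a3 k)) s t = - (k*k*a1) *\<^sub>R C1 (k * s + t) - (k*k*a2) *\<^sub>R C2 (k * s - t)"
    unfolding d1_def[of "d1 _"] by (rule vector_derivative_at)
qed

lemma d21X: "d2 (d1 (X a1 a2 a3 k)) = (\<lambda>s t. - (k*a1) *\<^sub>R C1 (k * s + t) + (k*a2) *\<^sub>R C2 (k * s - t))"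
proof (intro ext)
  fix s t
  have "((\<lambda>t. d1 (X a1 a2 a3 k) s t) has_vector_derivative - (k*a1) *\<^sub>R C1 (k * s + t) + (k*a2) *\<^sub>R C2 (k * s - t)) (at t)"
    unfolding d1X Pder(1-3)
    by (auto intro!: derivative_eq_intros simp: mult.commute Pder(4-6) algebra_simps)
  then show "d2 (d1 (X a1 a2 a3 k)) s t = - (k*a1) *\<^sub>R C1 (k * s + t) + (k*a2) *\<^sub>R C2 (k * s - t)"
    unfolding d2_def[of "d1 _"] by (rule vector_derivative_at)
qed

lemma d22X: "d2 (d2 (X a1 a2 a3 k)) = (\<lambda>s t. - X a1 a2 a3 k s t)"
proof (intro ext)
  fix s t
  have "((\<lambda>t. d2 (X a1 a2 a3 k) s t) has_vector_derivative - X a1 a2 a3 k s t) (at t)"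
    unfolding d2X Pder(1-3)
    by (auto intro!: derivative_eq_intros simp: X_def mult.commute Pder(4-6) algebra_simps)
  then show "d2 (d2 (X a1 a2 a3 k)) s t = - X a1 a2 a3 k s t"
    unfolding d2_def[of "d2 _"] by (rule vector_derivative_at)
qed

lemma fEFG:
  "fE (X a1 a2 a3 k) = (\<lambda>s t. k*k*(a1*a1+a2*a2))"
  "fF (X a1 a2 a3 k) = (\<lambda>s t. k*(a1*a1-a2*a2))"
  "fG (X a1 a2 a3 k) = (\<lambda>s t. a1*a1+a2*a2+a3*a3)"
  by (auto simp: fE_def fF_def fG_def d1X d2X inner_add_left inner_add_right inner_diff_left inner_diff_right inners algebra_simps)

lemma gaussX: "gauss_curv (X a1 a2 a3 k) s t = 0"
  unfolding gauss_curv_def fEFG p1_def p2_def by simp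

definition "EE a1 a2 k = k*k*(a1*a1+a2*a2)"
definition "FF a1 a2 k = k*(a1*a1-a2*a2)"
definition "NN a1 a2 k = k*k*EE a1 a2 k - EE a1 a2 k*EE a1 a2 k - 4*k*k*FF a1 a2 k*FF a1 a2 k + 8*EE a1 a2 k*FF a1 a2 k*FF a1 a2 k - 4*FF a1 a2 k*FF a1 a2 k*FF a1 a2 k*FF a1 a2 k"

context
  fixes a1 a2 a3 k :: real
  assumes a123: "a1*a1 + a2*a2 + a3*a3 = 1"
begin

lemma XX: "X a1 a2 a3 k s t \<bullet> X a1 a2 a3 k s t = 1"
  using a123 by (simp add: X_def inner_add_left inner_add_right inners algebra_simps)

lemma innX:
  "d1 (d1 (X a1 a2 a3 k)) s t \<bullet> d1 (X a1 a2 a3 k) s t = 0"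
  "d1 (d1 (X a1 a2 a3 k)) s t \<bullet> d2 (X a1 a2 a3 k) s t = 0"
  "d2 (d1 (X a1 a2 a3 k)) s t \<bullet> d1 (X a1 a2 a3 k) s t = 0"
  "d2 (d1 (X a1 a2 a3 k)) s t \<bullet> d2 (X a1 a2 a3 k) s t = 0"
  "d2 (d2 (X a1 a2 a3 k)) s t \<bullet> d1 (X a1 a2 a3 k) s t = 0"
  "d2 (d2 (X a1 a2 a3 k)) s t \<bullet> d2 (X a1 a2 a3 k) s t = 0"
  "X a1 a2 a3 k s t \<bullet> d1 (X a1 a2 a3 k) s t = 0"
  "X a1 a2 a3 k s t \<bullet> d2 (X a1 a2 a3 k) s t = 0"
  "d1 (d1 (X a1 a2 a3 k)) s t \<bullet> X a1 a2 a3 k s t = - (k*k*(a1*a1+a2*a2))"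
  "d2 (d1 (X a1 a2 a3 k)) s t \<bullet> X a1 a2 a3 k s t = - (k*(a1*a1-a2*a2))"
  "d2 (d2 (X a1 a2 a3 k)) s t \<bullet> X a1 a2 a3 k s t = - 1"
  unfolding d11X d21X d22X unfolding d1X d2X
  using XX[of s t]
  by (simp_all add: X_def inner_add_left inner_add_right inner_diff_left inner_diff_right inners algebra_simps)

lemma nrms:
  "nrm (X a1 a2 a3 k) s t (d1 (d1 (X a1 a2 a3 k)) s t) = d1 (d1 (X a1 a2 a3 k)) s t + (k*k*(a1*a1+a2*a2)) *\<^sub>R X a1 a2 a3 k s t"
  "nrm (X a1 a2 a3 k) s t (d2 (d1 (X a1 a2 a3 k)) s t) = d2 (d1 (X a1 a2 a3 k)) s t + (k*(a1*a1-a2*a2)) *\<^sub>R X a1 a2 a3 k s t"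
  "nrm (X a1 a2 a3 k) s t (d2 (d2 (X a1 a2 a3 k)) s t) = 0"
  unfolding nrm_def
  by (subst proj3; simp add: innX XX d22X)+

lemma innX2:
  "d1 (d1 (X a1 a2 a3 k)) s t \<bullet> d1 (d1 (X a1 a2 a3 k)) s t = k*k*(k*k*(a1*a1+a2*a2))"
  "d2 (d1 (X a1 a2 a3 k)) s t \<bullet> d2 (d1 (X a1 a2 a3 k)) s t = k*k*(a1*a1+a2*a2)"
  "d1 (d1 (X a1 a2 a3 k)) s t \<bullet> d2 (d1 (X a1 a2 a3 k)) s t = k*k*(k*(a1*a1-a2*a2))"
  unfolding d11X d21X
  by (simp_all add: inner_add_left inner_add_right inner_diff_left inner_diff_right inners algebra_simps)


lemma mean_curv_X: "(norm (mean_curv (X a1 a2 a3 k) s t))\<^sup>2 = (NN a1 a2 k) / (4*((EE a1 a2 k) - (FF a1 a2 k)*(FF a1 a2 k))^2)"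
proof -
  have G: "a1*a1+a2*a2+a3*a3 = 1" by (rule a123)
  have gen: "(norm ((1 / (2 * (E * 1 - F\<^sup>2))) *\<^sub>R (1 *\<^sub>R (d11 + E *\<^sub>R x) - (2 * F) *\<^sub>R (d21 + F *\<^sub>R x) + E *\<^sub>R 0)))\<^sup>2
     = (k*k*E - E*E - 4*k*k*F*F + 8*E*F*F - 4*F*F*F*F) / (4*(E - F*F)^2)"
    if "d11\<bullet>d11 = k*k*E" "d21\<bullet>d21 = E" "d11\<bullet>d21 = k*k*F" "d11\<bullet>x = -E" "d21\<bullet>x = -F" "x\<bullet>x = 1"
    for E F :: real and d11 d21 x :: "real^6"
  proof -
    have "(norm ((1 / (2 * (E * 1 - F\<^sup>2))) *\<^sub>R (1 *\<^sub>R (d11 + E *\<^sub>R x) - (2 * F) *\<^sub>R (d21 + F *\<^sub>R x) + E *\<^sub>R 0)))\<^sup>2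
      = (1 / (2 * (E - F*F)))^2 * ((d11 + E *\<^sub>R x - (2 * F) *\<^sub>R (d21 + F *\<^sub>R x)) \<bullet> (d11 + E *\<^sub>R x - (2 * F) *\<^sub>R (d21 + F *\<^sub>R x)))"
      by (simp add: power2_norm_eq_inner[symmetric] power_mult_distrib power2_eq_square)
    also have "(d11 + E *\<^sub>R x - (2 * F) *\<^sub>R (d21 + F *\<^sub>R x)) \<bullet> (d11 + E *\<^sub>R x - (2 * F) *\<^sub>R (d21 + F *\<^sub>R x))
        = k*k*E - E*E - 4*k*k*F*F + 8*E*F*F - 4*F*F*F*F"
      using that by (simp add: inner_add_left inner_add_right inner_diff_left inner_diff_right inner_commute algebra_simps)
    also have "(1 / (2 * (E - F*F)))^2 = 1 / (4*(E - F*F)^2)"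
      by (simp add: power2_eq_square algebra_simps)
    finally show ?thesis by simp
  qed
  show ?thesis
    unfolding mean_curv_def Let_def fEFG nrms G NN_def
    unfolding EE_def[of a1 a2 k, symmetric] FF_def[of a1 a2 k, symmetric]
    apply (rule gen)
    using innX[of s t] innX2[of s t] XX[of s t] by (simp_all add: EE_def FF_def algebra_simps)
qed

lemma willmore_X:
  assumes "0 \<le> A" "0 \<le> B"
  shows "willmore (X a1 a2 a3 k) A B = A * B * (((NN a1 a2 k) / (4*((EE a1 a2 k) - (FF a1 a2 k)*(FF a1 a2 k))^2) + 1) * sqrt ((EE a1 a2 k) - (FF a1 a2 k)*(FF a1 a2 k)))"
proof -
  have G: "a1*a1+a2*a2+a3*a3 = 1" by (rule a123)
  have "willmore (X a1 a2 a3 k) A B = integral (cbox (0, 0) (A, B)) (\<lambda>p. ((NN a1 a2 k) / (4*((EE a1 a2 k) - (FF a1 a2 k)*(FF a1 a2 k))^2) + 1) * sqrt ((EE a1 a2 k) - (FF a1 a2 k)*(FF a1 a2 k)))"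
    unfolding willmore_def mean_curv_X gaussX fEFG G
    by (simp add: EE_def FF_def power2_eq_square)
  also have "\<dots> = A * B * (((NN a1 a2 k) / (4*((EE a1 a2 k) - (FF a1 a2 k)*(FF a1 a2 k))^2) + 1) * sqrt ((EE a1 a2 k) - (FF a1 a2 k)*(FF a1 a2 k)))"
    using assms by (simp only: integral_const content_Pair) (simp add: cbox_interval)
  finally show ?thesis .
qed

end

definition Wf :: "real \<Rightarrow> real" where
  "Wf \<theta> = 6 * pi\<^sup>2 * (2 / sqrt (2 + (sin (2*\<theta>))\<^sup>2) - 3 / (sqrt (2 + (sin (2*\<theta>))\<^sup>2))^3)"

lemma willmore_family:
  assumes k: "k > 0"
  shows "willmore (X (cos \<theta> / sqrt 3) (sin \<theta> / sqrt 3) (sqrt (2/3)) k) (2*pi/k) (2*pi) = Wf \<theta>"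
proof -
  define c where "c = cos (2*\<theta>)"
  define \<rho> where "\<rho> = sqrt (2 + (sin (2*\<theta>))\<^sup>2)"
  have e: "2 + (sin (2*\<theta>))\<^sup>2 = 3 - c^2" unfolding c_def by (simp add: sin_squared_eq)
  have \<rho>2: "\<rho>^2 = 3 - c^2" unfolding \<rho>_def e[symmetric]
    by (rule real_sqrt_pow2) (simp add: add_nonneg_nonneg)
  have \<rho>pos: "\<rho> > 0" unfolding \<rho>_def by (simp add: add_pos_nonneg)
  have s3: "sqrt 3 * sqrt 3 = (3::real)" by simp
  have a1: "(cos \<theta> / sqrt 3) * (cos \<theta> / sqrt 3) = (1 + c)/6"
    unfolding c_def cos_double by (simp add: power2_eq_square sin_squared_eq[unfolded power2_eq_square] field_simps)
  have a2: "(sin \<theta> / sqrt 3) * (sin \<theta> / sqrt 3) = (1 - c)/6"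
    unfolding c_def cos_double by (simp add: power2_eq_square sin_squared_eq[unfolded power2_eq_square] field_simps)
  have a3: "sqrt (2/3) * sqrt (2/3) = (2/3::real)" by simp
  have a123: "(cos \<theta> / sqrt 3) * (cos \<theta> / sqrt 3) + (sin \<theta> / sqrt 3) * (sin \<theta> / sqrt 3) + sqrt (2/3) * sqrt (2/3) = 1"
    unfolding a1 a2 a3 by (simp add: field_simps)
  have "willmore (X (cos \<theta> / sqrt 3) (sin \<theta> / sqrt 3) (sqrt (2/3)) k) (2*pi/k) (2*pi)
     = (2*pi/k) * (2*pi) * (((k*k*(k*k/3) - (k*k/3)*(k*k/3) - 4*k*k*(k*c/3)*(k*c/3) + 8*(k*k/3)*(k*c/3)*(k*c/3) - 4*(k*c/3)*(k*c/3)*(k*c/3)*(k*c/3))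
         / (4*((k*k/3) - (k*c/3)*(k*c/3))^2) + 1) * sqrt ((k*k/3) - (k*c/3)*(k*c/3)))"
  proof -
    have EEv: "EE (cos \<theta> / sqrt 3) (sin \<theta> / sqrt 3) k = k*k/3"
      unfolding EE_def a1 a2 by (simp add: field_simps)
    have FFv: "FF (cos \<theta> / sqrt 3) (sin \<theta> / sqrt 3) k = k*c/3"
      unfolding FF_def a1 a2 by (simp add: field_simps)
    show ?thesis
      using k by (subst willmore_X[OF a123]) (simp_all add: NN_def EEv FFv)
  qed
  also have "sqrt ((k*k/3) - (k*c/3)*(k*c/3)) = k * \<rho> / 3"
  proof -
    have "(k*k/3) - (k*c/3)*(k*c/3) = k*k*(3 - c^2)/9" by (simp add: power2_eq_square field_simps)
    also have "\<dots> = (k * \<rho> / 3)^2" unfolding \<rho>2[symmetric] by (simp add: power2_eq_square)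
    finally have "(k*k/3) - (k*c/3)*(k*c/3) = (k * \<rho> / 3)^2" .
    then show ?thesis using k \<rho>pos by simp
  qed
  also have "(2*pi/k) * (2*pi) * (((k*k*(k*k/3) - (k*k/3)*(k*k/3) - 4*k*k*(k*c/3)*(k*c/3) + 8*(k*k/3)*(k*c/3)*(k*c/3) - 4*(k*c/3)*(k*c/3)*(k*c/3)*(k*c/3))
         / (4*((k*k/3) - (k*c/3)*(k*c/3))^2) + 1) * (k * \<rho> / 3))
     = 6 * pi\<^sup>2 * (2 / \<rho> - 3 / \<rho>^3)"
  proof -
    have cc: "c*c = 3 - \<rho>*\<rho>" using \<rho>2 by (simp add: power2_eq_square)
    have cc': "c*(c*x) = (3 - \<rho>*\<rho>)*x" for x using cc by (metis mult.assoc)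
    have h1: "(k*k/3) - (k*c/3)*(k*c/3) = k*k*\<rho>*\<rho>/9"
      by (simp add: field_simps) (simp add: cc' algebra_simps)
    have h2: "k*k*(k*k/3) - (k*k/3)*(k*k/3) - 4*k*k*(k*c/3)*(k*c/3) + 8*(k*k/3)*(k*c/3)*(k*c/3) - 4*(k*c/3)*(k*c/3)*(k*c/3)*(k*c/3)
        = k*k*k*k*(-54 + 36*\<rho>*\<rho> - 4*\<rho>*\<rho>*\<rho>*\<rho>)/81"
      by (simp add: field_simps) (simp add: cc' algebra_simps)
    show ?thesis unfolding h1 h2 using k \<rho>pos by (simp add: field_simps power2_eq_square power3_eq_cube)
  qed
  finally show ?thesis unfolding Wf_def \<rho>_def .
qed

end


lemma vector_6[simp]:
 "(vector [a,b,c,d,e,f] ::real^6)$1 = a"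
 "(vector [a,b,c,d,e,f] ::real^6)$2 = b"
 "(vector [a,b,c,d,e,f] ::real^6)$3 = c"
 "(vector [a,b,c,d,e,f] ::real^6)$4 = d"
 "(vector [a,b,c,d,e,f] ::real^6)$5 = e"
 "(vector [a,b,c,d,e,f] ::real^6)$6 = f"
  unfolding vector_def by simp_all

lemma exhaust_6:
  fixes x :: 6
  shows "x = 1 \<or> x = 2 \<or> x = 3 \<or> x = 4 \<or> x = 5 \<or> x = 6"
proof (induct x)
  case (of_int z)
  then have "0 \<le> z" "z < 6" by simp_all
  then have "z = 0 \<or> z = 1 \<or> z = 2 \<or> z = 3 \<or> z = 4 \<or> z = 5" by presburger
  then show ?case by auto
qed

lemma vec6_eq: "(x::real^6) = y \<longleftrightarrow> x$1 = y$1 \<and> x$2 = y$2 \<and> x$3 = y$3 \<and> x$4 = y$4 \<and> x$5 = y$5 \<and> x$6 = y$6"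
proof
  assume h: "x$1 = y$1 \<and> x$2 = y$2 \<and> x$3 = y$3 \<and> x$4 = y$4 \<and> x$5 = y$5 \<and> x$6 = y$6"
  show "x = y" unfolding vec_eq_iff
  proof
    fix i :: 6
    from exhaust_6[of i] h show "x$i = y$i" by auto
  qed
qed simp

abbreviation "e i \<equiv> (axis i 1 :: real^6)"

interpretation std: ON6 "e 1" "e 2" "e 3" "e 4" "e 5" "e 6"
  by unfold_locales (simp_all add: inner_axis_axis)

lemma ytheta_X: "ytheta \<theta> = std.X (cos \<theta> / sqrt 3) (sin \<theta> / sqrt 3) (sqrt (2/3)) 1"
  unfolding std.X_def std.C1_def std.C2_def std.C3_def Cv_def
  by (intro ext) (simp add: vec6_eq ytheta_def Let_def axis_def)



lemma UNIV6: "(UNIV::6 set) = {1,2,3,4,5,6}"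
  using exhaust_6 by auto

lemma inner6: "(x::real^6) \<bullet> y = x$1*y$1 + x$2*y$2 + x$3*y$3 + x$4*y$4 + x$5*y$5 + x$6*y$6"
  unfolding inner_vec_def UNIV6 by simp

lemma s2: "sqrt 2 * (sqrt 2 * x) = 2 * (x::real)"
  by (simp add: mult.assoc[symmetric])

lemma s18: "sqrt 18 = 3 * sqrt (2::real)"
proof -
  have "sqrt 18 = sqrt (3^2 * 2::real)" by simp
  also have "\<dots> = 3 * sqrt 2" by (simp only: real_sqrt_mult real_sqrt_abs)
  finally show ?thesis .
qed

definition Qm :: "real^6 \<Rightarrow> real^6" where
  "Qm x = vector [(x$1 + x$3)/sqrt 2, (x$2 - x$4)/sqrt 2, (x$2 + x$4)/sqrt 2, (x$3 - x$1)/sqrt 2, x$5, x$6]"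

lemma Qm_lin: "linear Qm"
  by (rule linearI) (simp_all add: Qm_def vec6_eq field_simps s2)

lemma Qm_orth: "orthogonal_transformation Qm"
  unfolding orthogonal_transformation_def
proof (intro conjI allI Qm_lin)
  fix v w :: "real^6"
  show "Qm v \<bullet> Qm w = v \<bullet> w"
    unfolding inner6 Qm_def by (simp add: field_simps)
qed

lemma ejiri_Q: "ejiri s t = Qm (ytheta (pi/4) (sqrt 3 * s) t)"
  by (simp add: vec6_eq ejiri_def ytheta_def Qm_def Let_def cos_add cos_diff sin_add sin_diff
      cos_45 sin_45 field_simps real_sqrt_mult[symmetric] s18)


interpretation qf: ON6 "Qm (e 1)" "Qm (e 2)" "Qm (e 3)" "Qm (e 4)" "Qm (e 5)" "Qm (e 6)"
  using Qm_orth unfolding orthogonal_transformation_def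
  by unfold_locales (simp_all add: inner_axis_axis)

definition V :: "real \<Rightarrow> surf6" where
  "V \<tau> = (\<lambda>s t. Qm (ytheta (pi/4 + \<tau>) (sqrt 3 * s) t))"

lemma V_X: "V \<tau> = qf.X (cos (pi/4+\<tau>) / sqrt 3) (sin (pi/4+\<tau>) / sqrt 3) (sqrt (2/3)) (sqrt 3)"
  unfolding V_def ytheta_X std.X_def qf.X_def std.C1_def std.C2_def std.C3_def qf.C1_def qf.C2_def qf.C3_def Cv_def
  by (intro ext) (simp add: linear_add[OF Qm_lin] linear_scale[OF Qm_lin])

lemma W_ytheta: "willmore (ytheta \<theta>) (2*pi) (2*pi) = 6 * pi\<^sup>2 * (2 / sqrt (2 + (sin (2*\<theta>))\<^sup>2) - 3 / (sqrt (2 + (sin (2*\<theta>))\<^sup>2))^3)"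
  using std.willmore_family[of 1 \<theta>] unfolding ytheta_X std.Wf_def by simp

lemma W_V: "willmore (V \<tau>) (2*pi / sqrt 3) (2*pi) = 6 * pi\<^sup>2 * (2 / sqrt (2 + (sin (2*(pi/4+\<tau>)))\<^sup>2) - 3 / (sqrt (2 + (sin (2*(pi/4+\<tau>)))\<^sup>2))^3)"
  using qf.willmore_family[of "sqrt 3" "pi/4+\<tau>"] unfolding V_X qf.Wf_def by simp

lemma g_mono: assumes "sqrt 2 \<le> x" "x < y" "y \<le> sqrt 3"
  shows "2 / x - 3 / x^3 < 2 / y - 3 / (y::real)^3"
proof -
  have x0: "x > 0" using assms(1) by (smt (verit) real_sqrt_gt_zero)
  have y0: "y > 0" using x0 assms by simp
  have x3: "x*x \<le> 3" using assms by (smt (verit) mult_mono real_sqrt_mult_self x0)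
  have y3: "y*y \<le> 3" using assms y0 by (smt (verit) mult_mono real_sqrt_mult_self)
  have "x*x*(y*y) \<le> 3*(y*y)" using x3 by (simp add: mult_right_mono)
  moreover have "x*x*(y*y) \<le> 3*(x*x)" using mult_left_mono[OF y3, of "x*x"] by (simp add: mult.commute)
  ultimately have key: "2*(x*x*(y*y)) < 3*(x*x + x*y + y*y)" using x0 y0 by (smt (verit) mult_pos_pos)
  have "2*x*x*y*y*y - 3*y*y*y < 2*x*x*x*y*y - 3*x*x*x"
  proof -
    have "(2*x*x*x*y*y - 3*x*x*x) - (2*x*x*y*y*y - 3*y*y*y) = (y - x) * (3*(x*x + x*y + y*y) - 2*(x*x*(y*y)))"
      by (simp add: algebra_simps)
    moreover have "(y - x) * (3*(x*x + x*y + y*y) - 2*(x*x*(y*y))) > 0"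
      using key assms(2) by simp
    ultimately show ?thesis by simp
  qed
  then show ?thesis using x0 y0 by (simp add: field_simps power3_eq_cube)
qed

lemma rho_range: "sqrt (2 + (sin (2*\<theta>))\<^sup>2) \<in> {sqrt 2..sqrt 3}"
proof -
  have "(sin (2*\<theta>))\<^sup>2 \<le> 1" by (simp add: abs_square_le_1)
  then show ?thesis by simp
qed



definition trigsum :: "('a::euclidean_space \<times> real \<times> 'b::real_normed_vector) list \<Rightarrow> 'a \<Rightarrow> 'b" where
  "trigsum L p = sum_list (map (\<lambda>(w,b,u). cos (w \<bullet> p + b) *\<^sub>R u) L)"

definition dmap :: "'a::euclidean_space \<Rightarrow> ('a \<times> real \<times> 'b::real_normed_vector) list \<Rightarrow> ('a \<times> real \<times> 'b) list" where
  "dmap v L = map (\<lambda>(w,b,u). (w, b + pi/2, (w \<bullet> v) *\<^sub>R u)) L"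

lemma trigsum_Nil[simp]: "trigsum [] p = 0" by (simp add: trigsum_def)
lemma trigsum_Cons[simp]: "trigsum ((w,b,u)#L) p = cos (w \<bullet> p + b) *\<^sub>R u + trigsum L p"
  by (simp add: trigsum_def)
lemma dmap_Nil[simp]: "dmap v [] = []" by (simp add: dmap_def)
lemma dmap_Cons[simp]: "dmap v ((w,b,u)#L) = (w, b + pi/2, (w \<bullet> v) *\<^sub>R u) # dmap v L" by (simp add: dmap_def)

lemma term_deriv:
  "((\<lambda>h. cos (w \<bullet> (p + h *\<^sub>R v) + b) *\<^sub>R u) has_vector_derivative (cos (w \<bullet> p + (b + pi/2)) * (w \<bullet> v)) *\<^sub>R u) (at 0)"
proof -
  have eq: "(\<lambda>h. cos (w \<bullet> (p + h *\<^sub>R v) + b) *\<^sub>R u) = (\<lambda>h. cos (h * (w \<bullet> v) + (w \<bullet> p + b)) *\<^sub>R u)"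
    by (simp add: inner_add_right algebra_simps)
  show ?thesis unfolding eq
    by (auto intro!: derivative_eq_intros simp: cos_add sin_add) (simp add: algebra_simps)
qed

lemma trigsum_deriv:
  "((\<lambda>h. trigsum L (p + h *\<^sub>R v)) has_vector_derivative trigsum (dmap v L) p) (at 0)"
proof (induction L)
  case Nil then show ?case by (simp add: has_vector_derivative_const)
next
  case (Cons a L)
  obtain w b u where a: "a = (w,b,u)" by (cases a) auto
  show ?case unfolding a trigsum_Cons dmap_Cons
    using has_vector_derivative_add[OF term_deriv[of w p v b u] Cons.IH]
    by (simp add: scaleR_scaleR)
qed

lemma dirder_trigsum: "dirder v (trigsum L) = trigsum (dmap v L)"
  unfolding dirder_def by (intro ext vector_derivative_at trigsum_deriv)

lemma iter_dirder_trigsum: "iter_dirder vs (trigsum L) = trigsum (foldr dmap vs L)"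
  by (induction vs) (simp_all add: dirder_trigsum)

lemma continuous_trigsum: "continuous_on UNIV (trigsum L)"
proof (induction L)
  case Nil then show ?case by (simp add: trigsum_def[abs_def])
next
  case (Cons a L)
  obtain w b u where a: "a = (w,b,u)" by (cases a) auto
  have e: "trigsum (a#L) = (\<lambda>p. cos (w \<bullet> p + b) *\<^sub>R u + trigsum L p)" unfolding a by auto
  show ?case unfolding e
    by (intro continuous_intros Cons.IH)
qed

lemma smooth_trigsum: "smooth_map (trigsum L)"
  unfolding smooth_map_def iter_dirder_trigsum dirder_trigsum
  by (auto intro: continuous_trigsum trigsum_deriv)

definition "TS f \<longleftrightarrow> (\<exists>L. f = trigsum L)"

lemma TS_smooth: "TS f \<Longrightarrow> smooth_map f"
  unfolding TS_def using smooth_trigsum by auto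

lemma TS_add: "TS f \<Longrightarrow> TS g \<Longrightarrow> TS (\<lambda>p. f p + g p)"
proof -
  assume "TS f" "TS g"
  then obtain L M where "f = trigsum L" "g = trigsum M" unfolding TS_def by auto
  then have "(\<lambda>p. f p + g p) = trigsum (L @ M)" by (auto simp: trigsum_def)
  then show ?thesis unfolding TS_def by blast
qed

lemma TS_cos: "TS (\<lambda>p. cos (w \<bullet> p + b) *\<^sub>R u)"
  unfolding TS_def by (rule exI[of _ "[(w,b,u)]"]) auto

lemma TS_sin: "TS (\<lambda>p. sin (w \<bullet> p + b) *\<^sub>R u)"
proof -
  have "(\<lambda>p. sin (w \<bullet> p + b) *\<^sub>R u) = (\<lambda>p. cos (w \<bullet> p + (b - pi/2)) *\<^sub>R u)"
    by (simp add: cos_diff algebra_simps)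
  then show ?thesis using TS_cos by simp
qed

lemma TS_cc: "TS (\<lambda>p. (cos (w1 \<bullet> p + b1) * cos (w2 \<bullet> p + b2)) *\<^sub>R u)"
proof -
  have eq: "(\<lambda>p. (cos (w1 \<bullet> p + b1) * cos (w2 \<bullet> p + b2)) *\<^sub>R u)
      = (\<lambda>p. cos ((w1 + w2) \<bullet> p + (b1 + b2)) *\<^sub>R (u /\<^sub>R 2) + cos ((w1 - w2) \<bullet> p + (b1 - b2)) *\<^sub>R (u /\<^sub>R 2))"
  proof (intro ext)
    fix p
    have "cos (w1 \<bullet> p + b1) * cos (w2 \<bullet> p + b2) = cos ((w1 + w2) \<bullet> p + (b1 + b2))/2 + cos ((w1 - w2) \<bullet> p + (b1 - b2))/2"
    proof -
      have cp: "cos A * cos B = cos (A + B)/2 + cos (A - B)/2" for A B :: real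
        by (simp add: cos_add cos_diff field_simps)
      have eqs: "(w1 + w2) \<bullet> p + (b1 + b2) = (w1 \<bullet> p + b1) + (w2 \<bullet> p + b2)" "(w1 - w2) \<bullet> p + (b1 - b2) = (w1 \<bullet> p + b1) - (w2 \<bullet> p + b2)"
        by (simp_all add: inner_add_left inner_diff_left)
      show ?thesis unfolding eqs by (rule cp)
    qed
    note h = this
    show "(cos (w1 \<bullet> p + b1) * cos (w2 \<bullet> p + b2)) *\<^sub>R u = cos ((w1 + w2) \<bullet> p + (b1 + b2)) *\<^sub>R (u /\<^sub>R 2) + cos ((w1 - w2) \<bullet> p + (b1 - b2)) *\<^sub>R (u /\<^sub>R 2)"
      unfolding h scaleR_add_left by simp
  qed
  show ?thesis unfolding eq by (rule TS_add[OF TS_cos TS_cos])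
qed

lemma TS_Cv: "TS (\<lambda>p. c *\<^sub>R Cv u v (w \<bullet> p + b))"
proof -
  have eq: "(\<lambda>p. c *\<^sub>R Cv u v (w \<bullet> p + b)) = (\<lambda>p. cos (w \<bullet> p + b) *\<^sub>R (c *\<^sub>R u) + sin (w \<bullet> p + b) *\<^sub>R (c *\<^sub>R v))"
    by (simp add: Cv_def algebra_simps)
  show ?thesis unfolding eq by (rule TS_add[OF TS_cos TS_sin])
qed

lemma TS_cCv: "TS (\<lambda>p. (c * cos (w1 \<bullet> p + b1)) *\<^sub>R Cv u v (w2 \<bullet> p + b2))"
proof -
  have eq: "(\<lambda>p. (c * cos (w1 \<bullet> p + b1)) *\<^sub>R Cv u v (w2 \<bullet> p + b2))
    = (\<lambda>p. (cos (w1 \<bullet> p + b1) * cos (w2 \<bullet> p + b2)) *\<^sub>R (c *\<^sub>R u) + (cos (w1 \<bullet> p + b1) * cos (w2 \<bullet> p + (b2 - pi/2))) *\<^sub>R (c *\<^sub>R v))"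
    by (simp add: Cv_def cos_diff algebra_simps)
  show ?thesis unfolding eq by (rule TS_add[OF TS_cc TS_cc])
qed



lemma V3_eq: "(\<lambda>q::real\<times>real\<times>real. V (fst q) (fst (snd q)) (snd (snd q))) =
  (\<lambda>q. ((1 / sqrt 3) * cos ((1::real,0::real,0::real) \<bullet> q + pi/4)) *\<^sub>R Cv (Qm (e 1)) (Qm (e 2)) ((0, sqrt 3, 1) \<bullet> q + 0)
     + ((1 / sqrt 3) * cos ((1::real,0::real,0::real) \<bullet> q + (pi/4 - pi/2))) *\<^sub>R Cv (Qm (e 3)) (Qm (e 4)) ((0, sqrt 3, -1) \<bullet> q + 0)
     + sqrt (2/3) *\<^sub>R Cv (Qm (e 5)) (Qm (e 6)) ((0, 0, 1) \<bullet> q + 0))"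
  unfolding V_X qf.X_def qf.C1_def qf.C2_def qf.C3_def
  by (intro ext, rename_tac q, case_tac q) (simp add: cos_add sin_add cos_diff add.commute inner_Pair cos_45 sin_45)

lemma V3_smooth: "smooth_map (\<lambda>q::real\<times>real\<times>real. V (fst q) (fst (snd q)) (snd (snd q)))"
  unfolding V3_eq by (intro TS_smooth TS_add TS_cCv TS_Cv)

lemma V2_eq: "(\<lambda>q::real\<times>real. V \<tau> (fst q) (snd q)) =
  (\<lambda>q. (cos (pi/4+\<tau>) / sqrt 3) *\<^sub>R Cv (Qm (e 1)) (Qm (e 2)) ((sqrt 3, 1) \<bullet> q + 0)
     + (sin (pi/4+\<tau>) / sqrt 3) *\<^sub>R Cv (Qm (e 3)) (Qm (e 4)) ((sqrt 3, -1) \<bullet> q + 0)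
     + sqrt (2/3) *\<^sub>R Cv (Qm (e 5)) (Qm (e 6)) ((0, 1) \<bullet> q + 0))"
  unfolding V_X qf.X_def qf.C1_def qf.C2_def qf.C3_def
  by (intro ext, rename_tac q, case_tac q) (simp add: add.commute inner_Pair)

lemma V2_smooth: "smooth_map (\<lambda>q::real\<times>real. V \<tau> (fst q) (snd q))"
  unfolding V2_eq by (intro TS_smooth TS_add TS_Cv)

lemma a123_gen: "(cos \<phi> / sqrt 3) * (cos \<phi> / sqrt 3) + (sin \<phi> / sqrt 3) * (sin \<phi> / sqrt 3) + sqrt (2/3) * sqrt (2/3) = 1"
proof -
  have h: "cos \<phi> * cos \<phi> + sin \<phi> * sin \<phi> = 1" using sin_cos_squared_add[of \<phi>] by (simp add: power2_eq_square)
  have "(cos \<phi> / sqrt 3) * (cos \<phi> / sqrt 3) + (sin \<phi> / sqrt 3) * (sin \<phi> / sqrt 3) + sqrt (2/3) * sqrt (2/3) = (cos \<phi> * cos \<phi> + sin \<phi> * sin \<phi>) / 3 + 2/3"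
    by (simp add: field_simps)
  then show ?thesis unfolding h by simp
qed

lemma ytheta_per1: "ytheta \<theta> (u + 2*pi) t = ytheta \<theta> u t"
proof -
  have "u + 2*pi + t = (u + t) + 2*pi" "u + 2*pi - t = (u - t) + 2*pi" by simp_all
  then show ?thesis unfolding ytheta_def Let_def by (simp only: sin_periodic cos_periodic)
qed

lemma ytheta_per2: "ytheta \<theta> u (t + 2*pi) = ytheta \<theta> u t"
proof -
  have "u + (t + 2*pi) = (u + t) + 2*pi" "u - (t + 2*pi) = (u - t) + 2*pi - 4*pi" by simp_all
  moreover have "cos (x - 4*pi) = cos x" "sin (x - 4*pi) = sin x" for x :: real
  proof -
    have "cos (x - 4*pi) = cos (x - 4*pi + 2*pi + 2*pi)" "sin (x - 4*pi) = sin (x - 4*pi + 2*pi + 2*pi)"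
      by (simp_all only: cos_periodic sin_periodic)
    then show "cos (x - 4*pi) = cos x" "sin (x - 4*pi) = sin x" by simp_all
  qed
  ultimately show ?thesis unfolding ytheta_def Let_def by (simp only: sin_periodic cos_periodic)
qed

lemma V_torus: "torus_immersion_S5 (V \<tau>) (2*pi / sqrt 3) (2*pi)"
  unfolding torus_immersion_S5_def
proof (intro conjI allI)
  show "2*pi / sqrt 3 > 0" "2*pi > 0" by simp_all
  show "smooth_map (\<lambda>p::real\<times>real. V \<tau> (fst p) (snd p))" by (rule V2_smooth)
next
  fix s t
  show "norm (V \<tau> s t) = 1"
    unfolding norm_eq_sqrt_inner V_X qf.XX[OF a123_gen] by simp
  show "V \<tau> (s + 2*pi / sqrt 3) t = V \<tau> s t"
  proof -
    have "sqrt 3 * (s + 2*pi / sqrt 3) = sqrt 3 * s + 2*pi" by (simp add: field_simps)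
    then show ?thesis unfolding V_def by (simp add: ytheta_per1)
  qed
  show "V \<tau> s (t + 2*pi) = V \<tau> s t"
    unfolding V_def by (simp add: ytheta_per2)
  show "fE (V \<tau>) s t * fG (V \<tau>) s t - (fF (V \<tau>) s t)\<^sup>2 > 0"
  proof -
    define x where "x = (cos (pi/4+\<tau>) / sqrt 3) * (cos (pi/4+\<tau>) / sqrt 3)"
    define y where "y = (sin (pi/4+\<tau>) / sqrt 3) * (sin (pi/4+\<tau>) / sqrt 3)"
    have x0: "x \<ge> 0" "y \<ge> 0" unfolding x_def y_def by simp_all
    have xy: "x + y = 1/3" using a123_gen[of "pi/4+\<tau>"] unfolding x_def y_def by simp
    have "(x - y)^2 \<le> (x + y)^2" using x0 by (simp add: power2_eq_square algebra_simps)
    then have "(x - y)^2 \<le> 1/9" using xy by (simp add: power2_eq_square)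
    then have "3 * (x + y) - (sqrt 3 * (x - y))^2 > 0" using xy by (simp add: power_mult_distrib)
    moreover have "fE (V \<tau>) s t * fG (V \<tau>) s t - (fF (V \<tau>) s t)\<^sup>2 = 3 * (x + y) - (sqrt 3 * (x - y))^2"
      unfolding V_X qf.fEFG a123_gen x_def y_def by simp
    ultimately show ?thesis by simp
  qed
qed

definition "yf \<tau> = sqrt (2 + (sin (2*(pi/4+\<tau>)))\<^sup>2)"
definition "Gf \<tau> = 6 * pi\<^sup>2 * (2 / yf \<tau> - 3 / (yf \<tau>)^3)"
definition "Pf \<tau> = 6 * pi\<^sup>2 * (-2 / (yf \<tau>)^2 + 9 / (yf \<tau>)^4) * (2 * sin (2*(pi/4+\<tau>)) / yf \<tau>)"

lemma yf_pos: "yf \<tau> > 0" unfolding yf_def by (simp add: add_pos_nonneg)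

lemma yf_deriv: "(yf has_real_derivative (2 * sin (2*(pi/4+\<tau>)) * cos (2*(pi/4+\<tau>)) / yf \<tau>)) (at \<tau>)"
proof -
  define S where "S = sin (2*(pi/4+\<tau>))"
  define C where "C = cos (2*(pi/4+\<tau>))"
  have p: "0 < 2 + S * S" by (simp add: add_pos_nonneg)
  have "(yf has_real_derivative inverse (sqrt (2 + S\<^sup>2)) / 2 * (2 * S * (C * 2))) (at \<tau>)"
    unfolding yf_def[abs_def] S_def C_def
    by (rule derivative_eq_intros refl | use p[unfolded S_def] in \<open>simp add: power2_eq_square\<close>)+
  then show ?thesis unfolding S_def[symmetric] C_def[symmetric] yf_def power2_eq_square
    by (simp add: field_simps)
qed

lemma gen_deriv:
  assumes "(y has_real_derivative y') (at \<tau>)" "y \<tau> \<noteq> 0"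
  shows "((\<lambda>\<tau>. 6 * pi\<^sup>2 * (2 / y \<tau> - 3 / (y \<tau>)^3)) has_real_derivative 6 * pi\<^sup>2 * (-2 / (y \<tau>)^2 + 9 / (y \<tau>)^4) * y') (at \<tau>)"
  using assms
  by (auto intro!: derivative_eq_intros simp: field_simps power2_eq_square power3_eq_cube power4_eq_xxxx)

lemma Gf_deriv: "(Gf has_real_derivative Pf \<tau> * cos (2*(pi/4+\<tau>))) (at \<tau>)"
proof -
  have y0: "yf \<tau> \<noteq> 0" using yf_pos[of \<tau>] by simp
  have "Pf \<tau> * cos (2*(pi/4+\<tau>)) = 6 * pi\<^sup>2 * (-2 / (yf \<tau>)^2 + 9 / (yf \<tau>)^4) * (2 * sin (2*(pi/4+\<tau>)) * cos (2*(pi/4+\<tau>)) / yf \<tau>)"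
    unfolding Pf_def by simp
  then show ?thesis unfolding Gf_def[abs_def] using gen_deriv[OF yf_deriv y0] by simp
qed

lemma yf0: "yf 0 = sqrt 3"
  unfolding yf_def by simp

lemma Pf0_pos: "Pf 0 > 0"
proof -
  have "(sqrt 3)^2 = (3::real)" "(sqrt 3)^4 = (9::real)"
    by simp (simp add: power4_eq_xxxx mult.assoc[symmetric])
  then show ?thesis unfolding Pf_def yf0 by simp
qed

lemma Pf_diff: "\<exists>P'. (Pf has_real_derivative P') (at 0)"
  unfolding Pf_def[abs_def]
  apply (rule exI)
  apply (rule derivative_intros yf_deriv | use yf_pos[of 0] in simp)+
  done

lemma unstable: "willmore_unstable ejiri (2*pi / sqrt 3) (2*pi)"
proof -
  obtain P' where P': "(Pf has_real_derivative P') (at 0)" using Pf_diff by blast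
  have cd: "((\<lambda>\<tau>. cos (2*(pi/4+\<tau>))) has_real_derivative -2) (at 0)"
    by (rule derivative_eq_intros refl | simp)+
  have D': "((\<lambda>\<tau>. Pf \<tau> * cos (2*(pi/4+\<tau>))) has_real_derivative (-2) * Pf 0) (at 0)"
    using DERIV_mult[OF P' cd] by simp
  have WG: "(\<lambda>r. willmore (V r) (2*pi / sqrt 3) (2*pi)) = Gf"
    by (intro ext) (simp add: W_V Gf_def yf_def)
  show ?thesis
    unfolding willmore_unstable_def
  proof (intro exI conjI)
    show "V 0 = ejiri" by (intro ext) (simp add: V_def ejiri_Q)
    show "smooth_map (\<lambda>q::real\<times>real\<times>real. V (fst q) (fst (snd q)) (snd (snd q)))" by (rule V3_smooth)
    show "\<forall>\<tau>\<in>{-1<..<1}. torus_immersion_S5 (V \<tau>) (2*pi / sqrt 3) (2*pi)" using V_torus by blast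
    show "\<forall>\<tau>\<in>{-1<..<1}. ((\<lambda>r. willmore (V r) (2*pi / sqrt 3) (2*pi)) has_real_derivative (\<lambda>\<tau>. Pf \<tau> * cos (2*(pi/4+\<tau>))) \<tau>) (at \<tau>)"
      unfolding WG using Gf_deriv by blast
    show "((\<lambda>\<tau>. Pf \<tau> * cos (2*(pi/4+\<tau>))) has_real_derivative (-2) * Pf 0) (at 0)" by (rule D')
    show "(-2) * Pf 0 < 0" using Pf0_pos by simp
    show "(1::real) > 0" by simp
  qed
qed

theorem proposition5p1:
  shows "(\<forall>\<theta>\<in>{0..pi/2}.
            sqrt (2 + (sin (2*\<theta>))\<^sup>2) \<in> {sqrt 2..sqrt 3} \<and>
            willmore (ytheta \<theta>) (2*pi) (2*pi)
              = 6 * pi\<^sup>2 * (2 / sqrt (2 + (sin (2*\<theta>))\<^sup>2) - 3 / (sqrt (2 + (sin (2*\<theta>))\<^sup>2))^3))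
       \<and> strict_mono_on {sqrt 2..sqrt 3} (\<lambda>\<rho>. 6 * pi\<^sup>2 * (2 / \<rho> - 3 / \<rho>^3))
       \<and> (\<exists>Q. orthogonal_transformation Q \<and>
              (\<forall>s t. ejiri s t = Q (ytheta (pi/4) (sqrt 3 * s) t)))
       \<and> willmore (ytheta (pi/4)) (2*pi) (2*pi) = 2 * pi\<^sup>2 * sqrt 3
       \<and> (\<forall>\<theta>\<in>{0..pi/2}. willmore (ytheta \<theta>) (2*pi) (2*pi) \<le> willmore (ytheta (pi/4)) (2*pi) (2*pi))
       \<and> willmore_unstable ejiri (2*pi / sqrt 3) (2*pi)"
proof -
  have smo: "strict_mono_on {sqrt 2..sqrt 3} (\<lambda>\<rho>. 6 * pi\<^sup>2 * (2 / \<rho> - 3 / \<rho>^3))"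
    unfolding strict_mono_on_def using g_mono by auto
  have r4: "sqrt (2 + (sin (2*(pi/4)))\<^sup>2) = sqrt 3" by simp
  have W4: "willmore (ytheta (pi/4)) (2*pi) (2*pi) = 6 * pi\<^sup>2 * (2 / sqrt 3 - 3 / (sqrt 3)^3)"
    using W_ytheta[of "pi/4"] unfolding r4 .
  have W4': "willmore (ytheta (pi/4)) (2*pi) (2*pi) = 2 * pi\<^sup>2 * sqrt 3"
  proof -
    have "(sqrt 3)^3 = 3 * sqrt (3::real)" by (simp add: power3_eq_cube)
    then show ?thesis unfolding W4 by (simp add: field_simps)
  qed
  have max: "willmore (ytheta \<theta>) (2*pi) (2*pi) \<le> willmore (ytheta (pi/4)) (2*pi) (2*pi)" for \<theta>
  proof -
    define r where "r = sqrt (2 + (sin (2*\<theta>))\<^sup>2)"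
    have rr: "r \<in> {sqrt 2..sqrt 3}" unfolding r_def by (rule rho_range)
    show ?thesis
    proof (cases "r = sqrt 3")
      case True
      then show ?thesis using W_ytheta[of \<theta>] W4 unfolding r_def by simp
    next
      case False
      then have "r < sqrt 3" using rr by simp
      then have "2 / r - 3 / r^3 < 2 / sqrt 3 - 3 / (sqrt 3)^3" using g_mono[of r "sqrt 3"] rr by simp
      then show ?thesis using W_ytheta[of \<theta>] W4 unfolding r_def by simp
    qed
  qed
  show ?thesis
    using rho_range W_ytheta smo Qm_orth ejiri_Q W4' max unstable by blast
qed


end
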